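(* Let $k>0$, $r\ge0$, and let $V_1,\dots,V_r\le\mathbb{Z}^k$ be subgroups of infinite index. Then there exists $x\in\mathbb{Z}^k$ such that $nx\notin\bigcup_{j=1}^rV_j$ for every integer $n>0$. *)

theory Defs
  imports "HOL-Analysis.Analysis"
begin

definition add_subgroup :: "'a::ab_group_add set \<Rightarrow> bool" where
  "add_subgroup V \<longleftrightarrow> 0 \<in> V \<and> (\<forall>x\<in>V. \<forall>y\<in>V. x + y \<in> V) \<and> (\<forall>x\<in>V. - x \<in> V)"

definition infinite_index :: "'a::ab_group_add set \<Rightarrow> bool" where
  "infinite_index V \<longleftrightarrow> infinite ((\<lambda>x. (\<lambda>v. x + v) ` V) ` UNIV)"

end

theory Submission
  imports Defs
begin

definition qv :: "int ^ 'k \<Rightarrow> rat ^ 'k" where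
  "qv z = (\<chi> i. of_int (z $ i))"

lemma qv_add: "qv (a + b) = qv a + qv b"
  by (simp add: qv_def vec_eq_iff)

lemma qv_scale: "qv (n *s a) = of_int n *s qv a"
  by (simp add: qv_def vec_eq_iff)

lemma qv_zero[simp]: "qv 0 = 0"
  by (simp add: qv_def vec_eq_iff)

lemma qv_sum: "qv (sum f A) = sum (\<lambda>x. qv (f x)) A"
  by (induction A rule: infinite_finite_induct) (auto simp: qv_add)

lemma qv_inj: "qv a = qv b \<Longrightarrow> a = b"
  by (simp add: qv_def vec_eq_iff)

lemma subgroup_nat_scale:
  assumes "add_subgroup V" "a \<in> V"
  shows "(int m) *s a \<in> V"
proof -
  have c: "0 \<in> V" "\<And>x y. x \<in> V \<Longrightarrow> y \<in> V \<Longrightarrow> x + y \<in> V"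
    using assms(1) unfolding add_subgroup_def by blast+
  show ?thesis
  proof (induction m)
    case 0
    have "int 0 *s a = 0" by (simp add: vec_eq_iff)
    then show ?case using c(1) by simp
  next
    case (Suc m)
    have eq: "int (Suc m) *s a = int m *s a + a" by (simp add: vec_eq_iff algebra_simps)
    show ?case unfolding eq by (rule c(2)[OF Suc.IH assms(2)])
  qed
qed

lemma subgroup_scale:
  assumes "add_subgroup V" "a \<in> V"
  shows "(n::int) *s a \<in> V"
proof (cases "n \<ge> 0")
  case True
  then have "n = int (nat n)" by simp
  then show ?thesis using subgroup_nat_scale[OF assms, of "nat n"] by simp
next
  case False
  define m where "m = nat (- n)"
  have m: "n = - int m" using False unfolding m_def by simp
  have neg: "\<And>x. x \<in> V \<Longrightarrow> - x \<in> V" using assms(1) unfolding add_subgroup_def by blast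
  have "n *s a = - (int m *s a)" using m by (simp add: vec_eq_iff)
  then show ?thesis using neg[OF subgroup_nat_scale[OF assms, of m]] by simp
qed

lemma subgroup_sum:
  assumes "add_subgroup V" "\<And>x. x \<in> A \<Longrightarrow> f x \<in> V"
  shows "sum f A \<in> V"
proof -
  have "0 \<in> V" "\<And>x y. x \<in> V \<Longrightarrow> y \<in> V \<Longrightarrow> x + y \<in> V"
    using assms(1) by (auto simp: add_subgroup_def)
  note h = this
  show ?thesis
  proof (cases "finite A")
    case True
    have "(\<forall>x\<in>A. f x \<in> V) \<longrightarrow> sum f A \<in> V"
      using True
    proof (induction A rule: finite_induct)
      case empty then show ?case using h(1) by simp
    next
      case (insert x F) then show ?case using h(2) by simp
    qed
    then show ?thesis using assms(2) by blast
  qed (simp add: h(1))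
qed

lemma common_denom:
  assumes "finite (F :: rat set)"
  shows "\<exists>D::int. D > 0 \<and> (\<forall>q\<in>F. \<exists>m::int. of_int D * q = of_int m)"
  using assms
proof (induction F rule: finite_induct)
  case empty then show ?case by (intro exI[of _ 1]) auto
next
  case (insert q F)
  then obtain D where D: "D > 0" "\<forall>q\<in>F. \<exists>m::int. of_int D * q = of_int m" by blast
  obtain a b where ab: "quotient_of q = (a, b)" by (cases "quotient_of q")
  have b: "b > 0" using quotient_of_denom_pos[OF ab] .
  have qe: "q = of_int a / of_int b" using quotient_of_div[OF ab] .
  show ?case
  proof (rule exI[of _ "D * b"], intro conjI ballI)
    show "D * b > 0" using D b by simp
    fix q' assume "q' \<in> insert q F"
    then show "\<exists>m::int. of_int (D * b) * q' = of_int m"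
    proof
      assume "q' = q"
      then show ?thesis using b qe by (intro exI[of _ "D * a"]) simp
    next
      assume "q' \<in> F"
      then obtain m where "of_int D * q' = of_int m" using D by blast
      then show ?thesis by (intro exI[of _ "b * m"]) (simp add: algebra_simps)
    qed
  qed
qed

lemma qv_axis: "qv (axis i 1) = axis i 1"
  by (simp add: qv_def vec_eq_iff axis_def)

lemma subspace_unscale:
  assumes "vec.subspace S" "(c::rat) \<noteq> 0" "c *s x \<in> S"
  shows "x \<in> S"
proof -
  have "x = inverse c *s (c *s x)" using assms(2) by (simp add: vector_smult_assoc)
  then show ?thesis using vec.subspace_scale[OF assms(1) assms(3)] by metis
qed

lemma exists_qv_outside:
  assumes "vec.subspace (S :: (rat ^ 'k) set)" "S \<noteq> UNIV"
  shows "\<exists>y. qv y \<notin> S"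
proof (rule ccontr)
  assume "\<not> ?thesis"
  then have ax: "axis i 1 \<in> S" for i using qv_axis[of i] by (metis)
  have "x \<in> S" for x :: "rat ^ 'k"
  proof -
    have "(\<Sum>i\<in>UNIV. (x$i) *s axis i 1) \<in> S"
      by (rule vec.subspace_sum[OF assms(1)]) (rule vec.subspace_scale[OF assms(1) ax])
    then show ?thesis by (simp add: basis_expansion)
  qed
  then show False using assms(2) by auto
qed

lemma avoid:
  fixes S :: "'j \<Rightarrow> (rat ^ 'k) set"
  assumes "finite J" "\<And>j. j \<in> J \<Longrightarrow> vec.subspace (S j)" "\<And>j. j \<in> J \<Longrightarrow> S j \<noteq> UNIV"
  shows "\<exists>z::int ^ 'k. \<forall>j\<in>J. qv z \<notin> S j"
  using assms
proof (induction J rule: finite_induct)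
  case empty then show ?case by simp
next
  case (insert j F)
  then obtain z where z: "\<forall>i\<in>F. qv z \<notin> S i" by auto
  have sj: "vec.subspace (S j)" "S j \<noteq> UNIV" using insert.prems by auto
  show ?case
  proof (cases "qv z \<in> S j")
    case False then show ?thesis using z by (intro exI[of _ z]) auto
  next
    case zin: True
    obtain y where y: "qv y \<notin> S j" using exists_qv_outside[OF sj] by blast
    define B where "B i = {t::int. qv (z + t *s y) \<in> S i}" for i
    have qvzt: "qv (z + t *s y) = qv z + of_int t *s qv y" for t by (simp add: qv_add qv_scale)
    have finB: "finite (B i)" if "i \<in> F" for i
    proof -
      have sub: "vec.subspace (S i)" using insert.prems that by auto
      have "t = t'" if "t \<in> B i" "t' \<in> B i" for t t'
      proof (rule ccontr)
        assume ne: "t \<noteq> t'"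
        have m1: "qv (z + t *s y) \<in> S i" "qv (z + t' *s y) \<in> S i"
          using that unfolding B_def by simp_all
        have "qv (z + t *s y) - qv (z + t' *s y) \<in> S i"
          by (rule vec.subspace_diff[OF sub m1])
        moreover have "of_int (t - t') *s qv y = qv (z + t *s y) - qv (z + t' *s y)"
          unfolding qvzt by (simp add: vec_eq_iff algebra_simps)
        ultimately have "of_int (t - t') *s qv y \<in> S i" by simp
        moreover have "rat_of_int (t - t') \<noteq> 0" using ne by simp
        ultimately have yi: "qv y \<in> S i" using subspace_unscale[OF sub] by blast
        have "qv z = qv (z + t *s y) - of_int t *s qv y" unfolding qvzt by simp
        also have "\<dots> \<in> S i"
          by (rule vec.subspace_diff[OF sub m1(1) vec.subspace_scale[OF sub yi]])
        finally show False using z \<open>i \<in> F\<close> by auto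
      qed
      then show ?thesis
      proof (cases "B i = {}")
        case False
        then obtain t0 where "t0 \<in> B i" by blast
        then have "B i \<subseteq> {t0}" using \<open>\<And>t t'. t \<in> B i \<Longrightarrow> t' \<in> B i \<Longrightarrow> t = t'\<close> by blast
        then show ?thesis using finite_subset by blast
      qed simp
    qed
    have "finite (insert 0 (\<Union>i\<in>F. B i))" using finB insert.hyps(1) by auto
    then obtain t where t: "t \<notin> insert 0 (\<Union>i\<in>F. B i)"
      using ex_new_if_finite[OF infinite_UNIV_int] by blast
    show ?thesis
    proof (rule exI[of _ "z + t *s y"], intro ballI)
      fix i assume "i \<in> insert j F"
      then show "qv (z + t *s y) \<notin> S i"
      proof
        assume ij: "i = j"
        show ?thesis
        proof
          assume "qv (z + t *s y) \<in> S i"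
          then have "qv (z + t *s y) - qv z \<in> S j" using ij vec.subspace_diff[OF sj(1) _ zin] by simp
          then have "of_int t *s qv y \<in> S j" unfolding qvzt by simp
          moreover have "rat_of_int t \<noteq> 0" using t by simp
          ultimately have "qv y \<in> S j" using subspace_unscale[OF sj(1)] by blast
          then show False using y by simp
        qed
      next
        assume "i \<in> F" then show ?thesis using t unfolding B_def by auto
      qed
    qed
  qed
qed

lemma axis_multiple_in:
  fixes V :: "(int ^ 'k) set"
  assumes V: "add_subgroup V" and sp: "vec.span (qv ` V) = UNIV"
  shows "\<exists>D::int. D > 0 \<and> D *s axis i 1 \<in> V"
proof -
  have "qv (axis i 1) \<in> vec.span (qv ` V)" using sp by simp
  then have "\<exists>T r. (\<Sum>a\<in>T. r a *s a) = qv (axis i 1) \<and> finite T \<and> T \<subseteq> qv ` V"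
    unfolding vec.span_explicit by (simp only: mem_Collect_eq) metis
  then obtain T r where T: "finite T" "T \<subseteq> qv ` V" and sr: "(\<Sum>a\<in>T. r a *s a) = qv (axis i 1)"
    by blast
  obtain D where D: "D > 0" "\<forall>q\<in>r ` T. \<exists>m::int. of_int D * q = of_int m"
    using common_denom[of "r ` T"] T(1) by blast
  then have "\<forall>a\<in>T. \<exists>m::int. of_int D * r a = of_int m" by simp
  then have "\<exists>m. \<forall>a\<in>T. of_int D * r a = of_int (m a)" by (rule bchoice)
  then obtain m where m: "\<And>a. a \<in> T \<Longrightarrow> of_int D * r a = of_int (m a)" by blast
  have "\<forall>a\<in>T. \<exists>v. v \<in> V \<and> qv v = a" using T(2) by blast
  then have "\<exists>g. \<forall>a\<in>T. g a \<in> V \<and> qv (g a) = a" by (rule bchoice)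
  then obtain g where g: "\<And>a. a \<in> T \<Longrightarrow> g a \<in> V" "\<And>a. a \<in> T \<Longrightarrow> qv (g a) = a" by blast
  have "qv (\<Sum>a\<in>T. m a *s g a) = (\<Sum>a\<in>T. qv (m a *s g a))" by (rule qv_sum)
  also have "\<dots> = (\<Sum>a\<in>T. of_int D *s (r a *s a))"
  proof (rule sum.cong)
    fix a assume a: "a \<in> T"
    have "qv (m a *s g a) = of_int (m a) *s a" unfolding qv_scale g(2)[OF a] ..
    also have "\<dots> = (of_int D * r a) *s a" unfolding m[OF a] ..
    also have "\<dots> = of_int D *s (r a *s a)" by (rule vector_smult_assoc[symmetric])
    finally show "qv (m a *s g a) = of_int D *s (r a *s a)" .
  qed (rule refl)
  also have "\<dots> = of_int D *s (\<Sum>a\<in>T. r a *s a)"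
    by (rule vec.scale_sum_right[symmetric])
  also have "\<dots> = qv (D *s axis i 1)" unfolding sr qv_scale ..
  finally have "D *s axis i 1 = (\<Sum>a\<in>T. m a *s g a)" by (rule qv_inj[symmetric])
  moreover have "(\<Sum>a\<in>T. m a *s g a) \<in> V"
    by (rule subgroup_sum[OF V]) (rule subgroup_scale[OF V g(1)])
  ultimately show ?thesis using D(1) by auto
qed

lemma coset_eq:
  assumes V: "add_subgroup V" and d: "x - y \<in> V"
  shows "(\<lambda>v. x + v) ` V = (\<lambda>v. y + v) ` V"
proof -
  have c1: "\<And>a b. a \<in> V \<Longrightarrow> b \<in> V \<Longrightarrow> a + b \<in> V" and c2: "\<And>a. a \<in> V \<Longrightarrow> - a \<in> V"
    using V unfolding add_subgroup_def by blast+
  have d': "y - x \<in> V" using c2[OF d] by simp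
  show ?thesis
  proof (intro equalityI subsetI)
    fix w assume "w \<in> (\<lambda>v. x + v) ` V"
    then obtain v where v: "v \<in> V" "w = x + v" by blast
    then have "w = y + ((x - y) + v)" by simp
    then show "w \<in> (\<lambda>v. y + v) ` V" using c1[OF d v(1)] by blast
  next
    fix w assume "w \<in> (\<lambda>v. y + v) ` V"
    then obtain v where v: "v \<in> V" "w = y + v" by blast
    then have "w = x + ((y - x) + v)" by simp
    then show "w \<in> (\<lambda>v. x + v) ` V" using c1[OF d' v(1)] by blast
  qed
qed

lemma span_UNIV_finite_index:
  fixes V :: "(int ^ 'k) set"
  assumes V: "add_subgroup V" and sp: "vec.span (qv ` V) = UNIV"
  shows "\<not> infinite_index V"
proof -
  have "\<forall>i. \<exists>D::int. D > 0 \<and> D *s axis i 1 \<in> V" using axis_multiple_in[OF V sp] by blast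
  then have "\<exists>Df. \<forall>i. Df i > (0::int) \<and> Df i *s axis i 1 \<in> V" by (rule choice)
  then obtain Df where Df: "\<And>i. Df i > 0" "\<And>i. Df i *s axis i 1 \<in> V" by blast
  define E where "E = (\<Prod>i\<in>UNIV. Df i)"
  have E0: "E > 0" unfolding E_def using Df(1) by (simp add: prod_pos)
  have EV: "E *s axis i 1 \<in> V" for i
  proof -
    have "E = Df i * (\<Prod>j\<in>UNIV - {i}. Df j)" unfolding E_def
      by (rule prod.remove) simp_all
    then have "E *s axis i 1 = (\<Prod>j\<in>UNIV - {i}. Df j) *s (Df i *s axis i 1)"
      by (simp add: vector_smult_assoc mult.commute)
    then show ?thesis using subgroup_scale[OF V Df(2)] by simp
  qed
  have key: "x - (\<chi> i. x $ i mod E) \<in> V" for x :: "int ^ 'k"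
  proof -
    have "x - (\<chi> i. x $ i mod E) = (\<chi> i. x $ i div E * E)"
      by (simp add: vec_eq_iff minus_mod_eq_div_mult)
    also have "\<dots> = (\<Sum>i\<in>UNIV. (x $ i div E * E) *s axis i 1)"
      using basis_expansion[of "\<chi> i. x $ i div E * E"] by simp
    also have "\<dots> = (\<Sum>i\<in>UNIV. (x $ i div E) *s (E *s axis i 1))"
      by (simp add: vector_smult_assoc)
    also have "\<dots> \<in> V"
      by (rule subgroup_sum[OF V]) (rule subgroup_scale[OF V EV])
    finally show ?thesis .
  qed
  have sub: "(\<lambda>x. (\<lambda>v. x + v) ` V) ` UNIV \<subseteq>
        (\<lambda>f. (\<lambda>v. (\<chi> i. f i) + v) ` V) ` (PiE UNIV (\<lambda>_. {0..<E}))"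
  proof
    fix c assume "c \<in> (\<lambda>x. (\<lambda>v. x + v) ` V) ` UNIV"
    then obtain x where c: "c = (\<lambda>v. x + v) ` V" by blast
    have "(\<lambda>i. x $ i mod E) \<in> PiE UNIV (\<lambda>_. {0..<E})" using E0 by (simp add: PiE_iff)
    moreover have "c = (\<lambda>v. (\<chi> i. x $ i mod E) + v) ` V"
      unfolding c by (rule coset_eq[OF V key])
    ultimately show "c \<in> (\<lambda>f. (\<lambda>v. (\<chi> i. f i) + v) ` V) ` (PiE UNIV (\<lambda>_. {0..<E}))"
      by blast
  qed
  have "finite (PiE (UNIV :: 'k set) (\<lambda>_. {0..<E}))" by (rule finite_PiE) simp_all
  then have "finite ((\<lambda>f. (\<lambda>v. (\<chi> i. f i) + v) ` V) ` (PiE (UNIV :: 'k set) (\<lambda>_. {0..<E})))"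
    by (rule finite_imageI)
  then have "finite ((\<lambda>x. (\<lambda>v. x + v) ` V) ` (UNIV :: (int ^ 'k) set))"
    using sub by (rule finite_subset[rotated])
  then show ?thesis unfolding infinite_index_def by simp
qed

theorem lemma4p8:
  fixes V :: "nat \<Rightarrow> (int ^ 'k) set" and r :: nat
  assumes "\<And>j. j \<in> {1..r} \<Longrightarrow> add_subgroup (V j)"
    and "\<And>j. j \<in> {1..r} \<Longrightarrow> infinite_index (V j)"
  shows "\<exists>x :: int ^ 'k. \<forall>n :: int. n > 0 \<longrightarrow> n *s x \<notin> (\<Union>j\<in>{1..r}. V j)"
proof -
  define S where "S j = vec.span (qv ` V j)" for j
  have "\<exists>z::int ^ 'k. \<forall>j\<in>{1..r}. qv z \<notin> S j"
  proof (rule avoid)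
    fix j :: nat assume j: "j \<in> {1..r}"
    show "vec.subspace (S j)" unfolding S_def by (rule vec.subspace_span)
    show "S j \<noteq> UNIV" unfolding S_def
      using span_UNIV_finite_index[OF assms(1)[OF j]] assms(2)[OF j] by blast
  qed simp
  then obtain z :: "int ^ 'k" where z: "\<forall>j\<in>{1..r}. qv z \<notin> S j" by blast
  show ?thesis
  proof (rule exI[of _ z], intro allI impI)
    fix n :: int assume n: "n > 0"
    show "n *s z \<notin> (\<Union>j\<in>{1..r}. V j)"
    proof
      assume "n *s z \<in> (\<Union>j\<in>{1..r}. V j)"
      then obtain j where j: "j \<in> {1..r}" "n *s z \<in> V j" by blast
      then have "qv (n *s z) \<in> qv ` V j" by blast
      then have "qv (n *s z) \<in> S j" unfolding S_def by (rule vec.span_base)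
      then have "of_int n *s qv z \<in> S j" by (simp only: qv_scale)
      moreover have "rat_of_int n \<noteq> 0" using n by simp
      moreover have "vec.subspace (S j)" unfolding S_def by (rule vec.subspace_span)
      ultimately have "qv z \<in> S j" using subspace_unscale by blast
      then show False using z j(1) by blast
    qed
  qed
qed

end
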